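(* Let $X$ be a finite-dimensional real vector space and $\phi:X\to\mathbf{R}$ a strictly convex norm that is continuously differentiable on $X\setminus\{0\}$. Let $S=\partial\{z:\phi(z)\le1\}$, $\xi:X\setminus\{0\}\to S$, $\xi(x)=x/\phi(x)$, and $\pi(\eta)=\mathrm{D}\xi(\eta)\in\mathrm{Hom}(X,X)$ for $\eta\in S$. Let $0<\varepsilon<1$ and $$R=\sup\Bigl(\mathbf{R}\cap\bigl\{r:0<r<1,\ \text{and for all }\eta,\zeta\in S,\ \phi(\eta-\zeta)\le r\Rightarrow\|\pi(\eta)-\pi(\zeta)\|_\phi\le1-\varepsilon\bigr\}\Bigr).$$ Then for every $\eta\in S$ the map $\pi(\eta)$ restricted to $S\cap\{z:\phi(z-\eta)\le R\}$ is injective.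
   Context: A norm $\phi$ is strictly convex if $\phi(a+b)=\phi(a)+\phi(b)$ implies $\phi(b)a=\phi(a)b$. For $L\in\mathrm{Hom}(X,X)$, $\|L\|_\phi=\sup\{\phi(Lx):\phi(x)\le1\}$. *)

theory Defs
  imports "HOL-Analysis.Analysis"
begin

definition is_norm_on :: "('a::real_vector \<Rightarrow> real) \<Rightarrow> bool" where
  "is_norm_on \<phi> \<longleftrightarrow>
     (\<forall>x. 0 \<le> \<phi> x) \<and> (\<forall>x. \<phi> x = 0 \<longleftrightarrow> x = 0) \<and>
     (\<forall>c x. \<phi> (c *\<^sub>R x) = \<bar>c\<bar> * \<phi> x) \<and>
     (\<forall>x y. \<phi> (x + y) \<le> \<phi> x + \<phi> y)"

definition strictly_convex_norm :: "('a::real_vector \<Rightarrow> real) \<Rightarrow> bool" where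
  "strictly_convex_norm \<phi> \<longleftrightarrow>
     (\<forall>a b. \<phi> (a + b) = \<phi> a + \<phi> b \<longrightarrow> \<phi> b *\<^sub>R a = \<phi> a *\<^sub>R b)"

definition C1_off_zero :: "('a::euclidean_space \<Rightarrow> real) \<Rightarrow> bool" where
  "C1_off_zero \<phi> \<longleftrightarrow>
     (\<exists>D :: 'a \<Rightarrow> 'a \<Rightarrow>\<^sub>L real.
        (\<forall>x. x \<noteq> 0 \<longrightarrow> (\<phi> has_derivative blinfun_apply (D x)) (at x)) \<and>
        continuous_on (- {0}) D)"

definition unit_sphere_phi :: "('a::euclidean_space \<Rightarrow> real) \<Rightarrow> 'a set" where
  "unit_sphere_phi \<phi> = frontier {z. \<phi> z \<le> 1}"

definition xi_map :: "('a::real_vector \<Rightarrow> real) \<Rightarrow> 'a \<Rightarrow> 'a" where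
  "xi_map \<phi> x = x /\<^sub>R \<phi> x"

definition pi_map :: "('a::euclidean_space \<Rightarrow> real) \<Rightarrow> 'a \<Rightarrow> 'a \<Rightarrow> 'a" where
  "pi_map \<phi> \<eta> = frechet_derivative (xi_map \<phi>) (at \<eta>)"

definition opnorm_phi :: "('a::real_vector \<Rightarrow> real) \<Rightarrow> ('a \<Rightarrow> 'a) \<Rightarrow> real" where
  "opnorm_phi \<phi> L = Sup ((\<lambda>x. \<phi> (L x)) ` {x. \<phi> x \<le> 1})"

definition R_const :: "('a::euclidean_space \<Rightarrow> real) \<Rightarrow> real \<Rightarrow> real" where
  "R_const \<phi> \<epsilon> = Sup {r. 0 < r \<and> r < 1 \<and>
      (\<forall>\<eta>\<in>unit_sphere_phi \<phi>. \<forall>\<zeta>\<in>unit_sphere_phi \<phi>.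
         \<phi> (\<eta> - \<zeta>) \<le> r \<longrightarrow>
         opnorm_phi \<phi> (\<lambda>x. pi_map \<phi> \<eta> x - pi_map \<phi> \<zeta> x) \<le> 1 - \<epsilon>)}"

end

theory Submission
  imports Defs
begin

lemma nrm_basic:
  assumes N: "is_norm_on \<phi>"
  shows "\<phi> (-x) = \<phi> x" "\<phi> (x - y) = \<phi> (y - x)" "\<phi> 0 = 0"
    "\<phi> (x + y) \<le> \<phi> x + \<phi> y" "0 \<le> \<phi> x" "\<phi> (c *\<^sub>R x) = \<bar>c\<bar> * \<phi> x"
    "\<bar>\<phi> x - \<phi> y\<bar> \<le> \<phi> (x - y)" "\<phi> x = 0 \<longleftrightarrow> x = 0"
proof -
  have sc: "\<And>c x. \<phi> (c *\<^sub>R x) = \<bar>c\<bar> * \<phi> x" and tr: "\<And>x y. \<phi> (x + y) \<le> \<phi> x + \<phi> y"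
    and z: "\<And>x. \<phi> x = 0 \<longleftrightarrow> x = 0" and p: "\<And>x. 0 \<le> \<phi> x"
    using N unfolding is_norm_on_def by auto
  show neg: "\<phi> (-x) = \<phi> x" for x using sc[of "-1" x] by simp
  show "\<phi> (x - y) = \<phi> (y - x)" using neg[of "x - y"] by simp
  show "\<phi> 0 = 0" using z by simp
  show "\<phi> (x + y) \<le> \<phi> x + \<phi> y" by (rule tr)
  show "0 \<le> \<phi> x" by (rule p)
  show "\<phi> (c *\<^sub>R x) = \<bar>c\<bar> * \<phi> x" by (rule sc)
  have "\<phi> x \<le> \<phi> (x - y) + \<phi> y" using tr[of "x - y" y] by simp
  moreover have "\<phi> y \<le> \<phi> (y - x) + \<phi> x" using tr[of "y - x" x] by simp
  moreover have "\<phi> (y - x) = \<phi> (x - y)" using neg[of "x - y"] by simp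
  ultimately show "\<bar>\<phi> x - \<phi> y\<bar> \<le> \<phi> (x - y)" by linarith
  show "\<phi> x = 0 \<longleftrightarrow> x = 0" by (rule z)
qed

lemma nrm_sum:
  assumes N: "is_norm_on \<phi>" and "finite A"
  shows "\<phi> (sum f A) \<le> (\<Sum>i\<in>A. \<phi> (f i))"
  using assms(2)
proof induction
  case empty then show ?case using nrm_basic(3)[OF N] by simp
next
  case (insert a A)
  then show ?case using nrm_basic(4)[OF N, of "f a" "sum f A"] by simp
qed

lemma nrm_upper:
  fixes \<phi> :: "'a::euclidean_space \<Rightarrow> real"
  assumes N: "is_norm_on \<phi>"
  shows "\<exists>C\<ge>0. \<forall>x. \<phi> x \<le> C * norm x"
proof (intro exI[of _ "\<Sum>b\<in>Basis. \<phi> b"] conjI allI)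
  show "0 \<le> (\<Sum>b\<in>Basis. \<phi> b)" using nrm_basic(5)[OF N] by (simp add: sum_nonneg)
  fix x :: 'a
  have "\<phi> x = \<phi> (\<Sum>b\<in>Basis. (x \<bullet> b) *\<^sub>R b)" by (simp add: euclidean_representation)
  also have "\<dots> \<le> (\<Sum>b\<in>Basis. \<phi> ((x \<bullet> b) *\<^sub>R b))" by (rule nrm_sum[OF N]) simp
  also have "\<dots> = (\<Sum>b\<in>Basis. \<bar>x \<bullet> b\<bar> * \<phi> b)" using nrm_basic(6)[OF N] by simp
  also have "\<dots> \<le> (\<Sum>b\<in>Basis. norm x * \<phi> b)"
    by (rule sum_mono, rule mult_right_mono) (auto simp: Basis_le_norm nrm_basic(5)[OF N])
  also have "\<dots> = (\<Sum>b\<in>Basis. \<phi> b) * norm x" by (simp add: sum_distrib_left mult.commute)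
  finally show "\<phi> x \<le> (\<Sum>b\<in>Basis. \<phi> b) * norm x" .
qed

lemma nrm_cont:
  fixes \<phi> :: "'a::euclidean_space \<Rightarrow> real"
  assumes N: "is_norm_on \<phi>"
  shows "continuous_on UNIV \<phi>"
proof -
  obtain C where C: "C \<ge> 0" "\<And>x. \<phi> x \<le> C * norm x" using nrm_upper[OF N] by blast
  have "C-lipschitz_on UNIV \<phi>"
  proof (rule lipschitz_onI)
    fix x y :: 'a
    have "dist (\<phi> x) (\<phi> y) \<le> \<phi> (x - y)" using nrm_basic(7)[OF N] by (simp add: dist_real_def)
    also have "\<dots> \<le> C * dist x y" using C(2)[of "x - y"] by (simp add: dist_norm)
    finally show "dist (\<phi> x) (\<phi> y) \<le> C * dist x y" .
  qed (use C in auto)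
  then show ?thesis by (rule lipschitz_on_continuous_on)
qed

lemma nrm_lower:
  fixes \<phi> :: "'a::euclidean_space \<Rightarrow> real"
  assumes N: "is_norm_on \<phi>"
  shows "\<exists>K>0. \<forall>x. norm x \<le> K * \<phi> x"
proof -
  have ne: "sphere (0::'a) 1 \<noteq> {}"
  proof -
    have "norm (SOME b. b \<in> (Basis::'a set)) = 1" by (rule norm_Basis[OF SOME_Basis])
    then have "(SOME b. b \<in> Basis) \<in> sphere (0::'a) 1" by (simp only: mem_sphere_0)
    then show ?thesis by (rule ex_in_conv[THEN iffD1, OF exI])
  qed
  obtain u where u: "u \<in> sphere (0::'a) 1" "\<And>y. y \<in> sphere 0 1 \<Longrightarrow> \<phi> u \<le> \<phi> y"
    using continuous_attains_inf[OF compact_sphere ne continuous_on_subset[OF nrm_cont[OF N]]] by blast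
  have "u \<noteq> 0" using u by auto
  then have "\<phi> u \<noteq> 0" using nrm_basic(8)[OF N, of u] by simp
  then have m: "\<phi> u > 0" using nrm_basic(5)[OF N, of u] by linarith
  show ?thesis
  proof (intro exI[of _ "1 / \<phi> u"] conjI allI)
    show "0 < 1 / \<phi> u" using m by simp
    fix x :: 'a
    show "norm x \<le> 1 / \<phi> u * \<phi> x"
    proof (cases "x = 0")
      case True then show ?thesis using nrm_basic(3)[OF N] by simp
    next
      case False
      then have "(1 / norm x) *\<^sub>R x \<in> sphere 0 1" by simp
      then have "\<phi> u \<le> \<phi> ((1 / norm x) *\<^sub>R x)" by (rule u(2))
      also have "\<dots> = \<phi> x / norm x" using nrm_basic(6)[OF N] by simp
      finally have "\<phi> u * norm x \<le> \<phi> x" using False by (simp add: field_simps)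
      then show ?thesis using m by (simp add: field_simps)
    qed
  qed
qed


lemma dir_quot:
  fixes \<phi> :: "'a::real_normed_vector \<Rightarrow> real"
  assumes d: "(\<phi> has_derivative f) (at x)"
  shows "((\<lambda>h. (\<phi> (x + h *\<^sub>R v) - \<phi> x) / h) \<longlongrightarrow> f v) (at_right 0)"
proof -
  have l: "((\<lambda>t. x + t *\<^sub>R v) has_derivative (\<lambda>t. t *\<^sub>R v)) (at 0)"
    by (auto intro!: derivative_eq_intros)
  have d': "(\<phi> has_derivative f) (at (x + 0 *\<^sub>R v))" using d by simp
  have "((\<lambda>t. \<phi> (x + t *\<^sub>R v)) has_derivative (\<lambda>t. f (t *\<^sub>R v))) (at 0)"
    using has_derivative_compose[OF l d'] by simp
  moreover have "(\<lambda>t. f (t *\<^sub>R v)) = (*) (f v)"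
    using has_derivative_bounded_linear[OF d]
    by (intro ext) (simp add: linear_simps bounded_linear.linear mult.commute)
  ultimately have "((\<lambda>t. \<phi> (x + t *\<^sub>R v)) has_real_derivative f v) (at 0)"
    by (simp add: has_field_derivative_def)
  then have "((\<lambda>h. (\<phi> (x + h *\<^sub>R v) - \<phi> x) / h) \<longlongrightarrow> f v) (at 0)"
    unfolding DERIV_def by simp
  then show ?thesis by (rule tendsto_mono[OF at_le, rotated]) simp
qed

lemma deriv_sub:
  fixes \<phi> :: "'a::real_normed_vector \<Rightarrow> real"
  assumes N: "is_norm_on \<phi>" and d: "(\<phi> has_derivative f) (at x)"
  shows "f v \<le> \<phi> v"
proof -
  have lim: "((\<lambda>h. (\<phi> (x + h *\<^sub>R v) - \<phi> x) / h) \<longlongrightarrow> f v) (at_right 0)"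
    by (rule dir_quot[OF d])
  have ev: "\<forall>\<^sub>F h in at_right (0::real). (\<phi> (x + h *\<^sub>R v) - \<phi> x) / h \<le> \<phi> v"
    using eventually_at_right_less
  proof (rule eventually_mono)
    fix h :: real assume h: "0 < h"
    have "\<phi> (x + h *\<^sub>R v) \<le> \<phi> x + h * \<phi> v"
      using nrm_basic(4)[OF N, of x "h *\<^sub>R v"] nrm_basic(6)[OF N, of h v] h by simp
    then show "(\<phi> (x + h *\<^sub>R v) - \<phi> x) / h \<le> \<phi> v" using h by (simp add: field_simps)
  qed
  show ?thesis using tendsto_upperbound[OF lim ev] by simp
qed

lemma deriv_self:
  fixes \<phi> :: "'a::real_normed_vector \<Rightarrow> real"
  assumes N: "is_norm_on \<phi>" and d: "(\<phi> has_derivative f) (at x)"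
  shows "f x = \<phi> x"
proof (rule tendsto_unique[OF _ dir_quot[OF d, of x]])
  have "\<forall>\<^sub>F h in at_right 0. \<phi> x = (\<phi> (x + h *\<^sub>R x) - \<phi> x) / h"
    using eventually_at_right_less[of "0::real"]
  proof (rule eventually_mono)
    fix h :: real assume h: "0 < h"
    have "\<phi> (x + h *\<^sub>R x) = \<phi> ((1 + h) *\<^sub>R x)" by (simp add: algebra_simps)
    also have "\<dots> = (1 + h) * \<phi> x" using nrm_basic(6)[OF N] h by simp
    finally show "\<phi> x = (\<phi> (x + h *\<^sub>R x) - \<phi> x) / h" using h by (simp add: field_simps)
  qed
  then show "((\<lambda>h. (\<phi> (x + h *\<^sub>R x) - \<phi> x) / h) \<longlongrightarrow> \<phi> x) (at_right 0)"
    by (rule Lim_transform_eventually[OF tendsto_const])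
qed simp

lemma sphere_sub:
  fixes \<phi> :: "'a::euclidean_space \<Rightarrow> real"
  assumes N: "is_norm_on \<phi>"
  shows "unit_sphere_phi \<phi> \<subseteq> {z. \<phi> z = 1}"
proof
  fix z assume z: "z \<in> unit_sphere_phi \<phi>"
  have cl: "closed {z. \<phi> z \<le> 1}"
    by (rule closed_Collect_le[OF nrm_cont[OF N] continuous_on_const])
  have op: "open {z. \<phi> z < 1}"
    by (rule open_Collect_less[OF nrm_cont[OF N] continuous_on_const])
  have zc: "z \<in> closure {z. \<phi> z \<le> 1}" and zi: "z \<notin> interior {z. \<phi> z \<le> 1}"
    using z unfolding unit_sphere_phi_def frontier_def by auto
  have sub: "{z. \<phi> z < 1} \<subseteq> interior {z. \<phi> z \<le> 1}"
    by (rule interior_maximal[OF _ op]) auto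
  have "\<phi> z \<le> 1" using zc unfolding closure_closed[OF cl] by simp
  moreover have "\<not> \<phi> z < 1" using zi sub by blast
  ultimately show "z \<in> {z. \<phi> z = 1}" by simp
qed

lemma pi_formula:
  fixes \<phi> :: "'a::euclidean_space \<Rightarrow> real"
  assumes d: "(\<phi> has_derivative f) (at x)" and x1: "\<phi> x = 1"
  shows "pi_map \<phi> x = (\<lambda>v. v - f v *\<^sub>R x)"
proof -
  have "(xi_map \<phi> has_derivative (\<lambda>v. inverse (\<phi> x) *\<^sub>R v + (- (inverse (\<phi> x) * f v * inverse (\<phi> x))) *\<^sub>R x)) (at x)"
    unfolding xi_map_def divide_inverse_commute scaleR_conv_of_real
    using x1 d by (auto intro!: derivative_eq_intros simp: scaleR_conv_of_real)
  then have "(xi_map \<phi> has_derivative (\<lambda>v. v - f v *\<^sub>R x)) (at x)" using x1 by simp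
  then show ?thesis unfolding pi_map_def by (rule frechet_derivative_at[symmetric])
qed

lemma deriv_pos:
  fixes \<phi> :: "'a::euclidean_space \<Rightarrow> real"
  assumes N: "is_norm_on \<phi>" and SC: "strictly_convex_norm \<phi>"
    and d: "(\<phi> has_derivative f) (at \<zeta>)" and z1: "\<phi> \<zeta> = 1" and e1: "\<phi> \<eta> = 1"
    and le: "\<phi> (\<zeta> - \<eta>) \<le> 1"
  shows "f \<eta> > 0"
proof -
  have lin: "linear f" using has_derivative_bounded_linear[OF d] bounded_linear.linear by blast
  have fz: "f \<zeta> = 1" using deriv_self[OF N d] z1 by simp
  have a: "f (\<zeta> - \<eta>) = 1 - f \<eta>" using lin fz by (simp add: linear_diff)
  have b: "f (\<zeta> - \<eta>) \<le> \<phi> (\<zeta> - \<eta>)" by (rule deriv_sub[OF N d])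
  show ?thesis
  proof (rule ccontr)
    assume "\<not> f \<eta> > 0"
    with a b le have f0: "f \<eta> = 0" and p1: "\<phi> (\<zeta> - \<eta>) = 1" by auto
    have "f (\<zeta> + (\<zeta> - \<eta>)) = 2" using lin fz a f0 by (simp add: linear_add)
    moreover have "f (\<zeta> + (\<zeta> - \<eta>)) \<le> \<phi> (\<zeta> + (\<zeta> - \<eta>))" by (rule deriv_sub[OF N d])
    moreover have "\<phi> (\<zeta> + (\<zeta> - \<eta>)) \<le> \<phi> \<zeta> + \<phi> (\<zeta> - \<eta>)" by (rule nrm_basic(4)[OF N])
    ultimately have "\<phi> (\<zeta> + (\<zeta> - \<eta>)) = \<phi> \<zeta> + \<phi> (\<zeta> - \<eta>)" using z1 p1 by linarith
    then have "\<phi> (\<zeta> - \<eta>) *\<^sub>R \<zeta> = \<phi> \<zeta> *\<^sub>R (\<zeta> - \<eta>)"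
      using SC unfolding strictly_convex_norm_def by (elim allE impE) simp_all
    then have "\<eta> = 0" using z1 p1 by simp
    then show False using e1 nrm_basic(3)[OF N] by simp
  qed
qed

lemma R_set_nonempty:
  fixes \<phi> :: "'a::euclidean_space \<Rightarrow> real"
  assumes N: "is_norm_on \<phi>" and C1: "C1_off_zero \<phi>" and e0: "0 < \<epsilon>" and e1: "\<epsilon> < 1"
  shows "\<exists>r. 0 < r \<and> r < 1 \<and>
      (\<forall>\<eta>\<in>unit_sphere_phi \<phi>. \<forall>\<zeta>\<in>unit_sphere_phi \<phi>.
         \<phi> (\<eta> - \<zeta>) \<le> r \<longrightarrow>
         opnorm_phi \<phi> (\<lambda>x. pi_map \<phi> \<eta> x - pi_map \<phi> \<zeta> x) \<le> 1 - \<epsilon>)"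
proof -
  obtain D :: "'a \<Rightarrow> 'a \<Rightarrow>\<^sub>L real" where
    dD: "\<And>x. x \<noteq> 0 \<Longrightarrow> (\<phi> has_derivative blinfun_apply (D x)) (at x)"
    and cD: "continuous_on (- {0}) D"
    using C1 unfolding C1_off_zero_def by blast
  obtain K where K: "K > 0" "\<And>x. norm x \<le> K * \<phi> x" using nrm_lower[OF N] by blast
  define S where "S = unit_sphere_phi \<phi>"
  have S1: "\<And>z. z \<in> S \<Longrightarrow> \<phi> z = 1" using sphere_sub[OF N] S_def by blast
  have S0: "\<And>z. z \<in> S \<Longrightarrow> z \<noteq> 0" using S1 nrm_basic(3)[OF N] by force
  have "closed S" unfolding S_def unit_sphere_phi_def by (rule frontier_closed)
  moreover have "bounded S"
  proof (rule bounded_subset[OF bounded_cball[of 0 K]])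
    show "S \<subseteq> cball 0 K"
    proof
      fix z assume "z \<in> S"
      then show "z \<in> cball 0 K" using K(2)[of z] S1[of z] by simp
    qed
  qed
  ultimately have cS: "compact S" by (simp add: compact_eq_bounded_closed)
  have "S \<subseteq> - {0}" using S0 by blast
  then have "uniformly_continuous_on S D"
    by (rule compact_uniformly_continuous[OF continuous_on_subset[OF cD] cS])
  then have uc: "\<forall>e>0. \<exists>d>0. \<forall>x\<in>S. \<forall>x'\<in>S. dist x' x < d \<longrightarrow> dist (D x') (D x) < e"
    by (simp only: uniformly_continuous_on_def)
  have epos: "(1 - \<epsilon>) / (2 * K) > 0" using K(1) e1 by simp
  obtain d where d: "d > 0" and
    dd0: "\<forall>x\<in>S. \<forall>x'\<in>S. dist x' x < d \<longrightarrow> dist (D x') (D x) < (1 - \<epsilon>) / (2 * K)"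
    using uc epos by blast
  have dd: "dist (D x') (D x) < (1 - \<epsilon>) / (2 * K)" if "x \<in> S" "x' \<in> S" "dist x' x < d" for x x'
    using dd0 that by blast
  define r where "r = min (d / (2 * K)) ((1 - \<epsilon>) / 2)"
  have r0: "0 < r" using d K e1 by (simp add: r_def)
  have "(1 - \<epsilon>) / 2 < 1" using e0 by simp
  then have r1: "r < 1" unfolding r_def by (rule min.strict_coboundedI2)
  have pi: "pi_map \<phi> z = (\<lambda>v. v - D z v *\<^sub>R z)" if "z \<in> S" for z
    by (rule pi_formula[OF dD[OF S0[OF that]] S1[OF that]])
  have Dle: "\<And>z x. z \<in> S \<Longrightarrow> \<bar>D z x\<bar> \<le> \<phi> x"
  proof -
    fix z x assume z: "z \<in> S"
    have "D z x \<le> \<phi> x" by (rule deriv_sub[OF N dD[OF S0[OF z]]])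
    moreover have "D z (-x) \<le> \<phi> (-x)" by (rule deriv_sub[OF N dD[OF S0[OF z]]])
    ultimately show "\<bar>D z x\<bar> \<le> \<phi> x" using nrm_basic(1)[OF N, of x] by (simp add: blinfun.minus_right)
  qed
  show ?thesis
  proof (intro exI[of _ r] conjI r0 r1 ballI impI)
    fix \<eta> \<zeta> assume eS: "\<eta> \<in> unit_sphere_phi \<phi>" and zS: "\<zeta> \<in> unit_sphere_phi \<phi>"
      and dist: "\<phi> (\<eta> - \<zeta>) \<le> r"
    have eS': "\<eta> \<in> S" and zS': "\<zeta> \<in> S" using eS zS S_def by auto
    have "norm (\<zeta> - \<eta>) \<le> K * \<phi> (\<zeta> - \<eta>)" by (rule K(2))
    also have "\<dots> \<le> K * r" using dist nrm_basic(2)[OF N, of \<zeta> \<eta>] K by simp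
    also have "\<dots> \<le> d / 2" using K by (simp add: r_def min_def field_simps split: if_splits)
    finally have "dist \<zeta> \<eta> < d" using d by (simp add: dist_norm)
    then have nD: "norm (D \<zeta> - D \<eta>) < (1 - \<epsilon>) / (2 * K)"
      using dd[OF eS' zS'] by (simp add: dist_norm)
    show "opnorm_phi \<phi> (\<lambda>x. pi_map \<phi> \<eta> x - pi_map \<phi> \<zeta> x) \<le> 1 - \<epsilon>"
      unfolding opnorm_phi_def
    proof (rule cSup_least)
      show "(\<lambda>x. \<phi> (pi_map \<phi> \<eta> x - pi_map \<phi> \<zeta> x)) ` {x. \<phi> x \<le> 1} \<noteq> {}"
      proof -
        have "(0::'a) \<in> {x. \<phi> x \<le> 1}" using nrm_basic(3)[OF N] by simp
        then show ?thesis by blast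
      qed
    next
      fix y assume "y \<in> (\<lambda>x. \<phi> (pi_map \<phi> \<eta> x - pi_map \<phi> \<zeta> x)) ` {x. \<phi> x \<le> 1}"
      then obtain x where x: "\<phi> x \<le> 1" and y: "y = \<phi> (pi_map \<phi> \<eta> x - pi_map \<phi> \<zeta> x)" by auto
      have "(x - D \<eta> x *\<^sub>R \<eta>) - (x - D \<zeta> x *\<^sub>R \<zeta>) = (D \<zeta> x - D \<eta> x) *\<^sub>R \<zeta> + D \<eta> x *\<^sub>R (\<zeta> - \<eta>)"
        by (simp add: algebra_simps)
      then have pe: "pi_map \<phi> \<eta> x - pi_map \<phi> \<zeta> x = (D \<zeta> x - D \<eta> x) *\<^sub>R \<zeta> + D \<eta> x *\<^sub>R (\<zeta> - \<eta>)"
        unfolding pi[OF eS'] pi[OF zS'] .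
      have "y = \<phi> ((D \<zeta> x - D \<eta> x) *\<^sub>R \<zeta> + D \<eta> x *\<^sub>R (\<zeta> - \<eta>))"
        unfolding y pe ..
      also have "\<dots> \<le> \<phi> ((D \<zeta> x - D \<eta> x) *\<^sub>R \<zeta>) + \<phi> (D \<eta> x *\<^sub>R (\<zeta> - \<eta>))"
        by (rule nrm_basic(4)[OF N])
      also have "\<dots> = \<bar>D \<zeta> x - D \<eta> x\<bar> + \<bar>D \<eta> x\<bar> * \<phi> (\<eta> - \<zeta>)"
      proof -
        have q1: "\<phi> ((D \<zeta> x - D \<eta> x) *\<^sub>R \<zeta>) = \<bar>D \<zeta> x - D \<eta> x\<bar> * \<phi> \<zeta>"
          by (rule nrm_basic(6)[OF N])
        have q2: "\<phi> (D \<eta> x *\<^sub>R (\<zeta> - \<eta>)) = \<bar>D \<eta> x\<bar> * \<phi> (\<zeta> - \<eta>)"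
          by (rule nrm_basic(6)[OF N])
        have q3: "\<phi> (\<zeta> - \<eta>) = \<phi> (\<eta> - \<zeta>)" by (rule nrm_basic(2)[OF N])
        show ?thesis unfolding q1 q2 q3 S1[OF zS'] by simp
      qed
      also have "\<dots> \<le> (1 - \<epsilon>) / 2 + 1 * ((1 - \<epsilon>) / 2)"
      proof (rule add_mono)
        have "\<bar>D \<zeta> x - D \<eta> x\<bar> = norm (blinfun_apply (D \<zeta> - D \<eta>) x)"
          by (simp add: blinfun.diff_left)
        also have "\<dots> \<le> norm (D \<zeta> - D \<eta>) * norm x" by (rule norm_blinfun)
        also have "\<dots> \<le> ((1 - \<epsilon>) / (2 * K)) * K"
        proof (rule mult_mono)
          show "norm x \<le> K" proof -
            have "K * \<phi> x \<le> K * 1" using x K(1) by (intro mult_left_mono) auto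
            then show ?thesis using K(2)[of x] by linarith
          qed
        next
          show "norm (D \<zeta> - D \<eta>) \<le> (1 - \<epsilon>) / (2 * K)" using nD by linarith
        next
          show "0 \<le> norm x" by simp
        next
          show "0 \<le> (1 - \<epsilon>) / (2 * K)" using e1 K(1) by simp
        qed
        also have "\<dots> = (1 - \<epsilon>) / 2" using K by simp
        finally show "\<bar>D \<zeta> x - D \<eta> x\<bar> \<le> (1 - \<epsilon>) / 2" .
      next
        show "\<bar>D \<eta> x\<bar> * \<phi> (\<eta> - \<zeta>) \<le> 1 * ((1 - \<epsilon>) / 2)"
        proof (rule mult_mono)
          show "\<bar>D \<eta> x\<bar> \<le> 1" using Dle[OF eS', of x] x by linarith
          have "r \<le> (1 - \<epsilon>) / 2" unfolding r_def by (rule min.cobounded2)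
          then show "\<phi> (\<eta> - \<zeta>) \<le> (1 - \<epsilon>) / 2" using dist by linarith
          show "0 \<le> (1::real)" by simp
          show "0 \<le> \<phi> (\<eta> - \<zeta>)" by (rule nrm_basic(5)[OF N])
        qed
      qed
      finally show "y \<le> 1 - \<epsilon>" by simp
    qed
  qed
qed

theorem lemma3p6:
  fixes \<phi> :: "'a::euclidean_space \<Rightarrow> real" and \<epsilon> :: real
  assumes "is_norm_on \<phi>"
    and "strictly_convex_norm \<phi>"
    and "C1_off_zero \<phi>"
    and "0 < \<epsilon>" and "\<epsilon> < 1"
  shows "\<forall>\<eta>\<in>unit_sphere_phi \<phi>.
           inj_on (pi_map \<phi> \<eta>)
             (unit_sphere_phi \<phi> \<inter> {z. \<phi> (z - \<eta>) \<le> R_const \<phi> \<epsilon>})"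
proof
  note N = assms(1) and SC = assms(2)
  obtain D :: "'a \<Rightarrow> 'a \<Rightarrow>\<^sub>L real" where
    dD: "\<And>x. x \<noteq> 0 \<Longrightarrow> (\<phi> has_derivative blinfun_apply (D x)) (at x)"
    using assms(3) unfolding C1_off_zero_def by blast
  define S where "S = unit_sphere_phi \<phi>"
  have S1: "\<And>z. z \<in> S \<Longrightarrow> \<phi> z = 1" using sphere_sub[OF N] S_def by blast
  have S0: "\<And>z. z \<in> S \<Longrightarrow> z \<noteq> 0" using S1 nrm_basic(3)[OF N] by force
  have pi: "pi_map \<phi> z = (\<lambda>v. v - D z v *\<^sub>R z)" if "z \<in> S" for z
    by (rule pi_formula[OF dD[OF S0[OF that]] S1[OF that]])
  have R1: "R_const \<phi> \<epsilon> \<le> 1"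
    unfolding R_const_def
    apply (rule cSup_least)
     apply (simp only: ex_in_conv[symmetric] mem_Collect_eq)
     apply (rule R_set_nonempty[OF N assms(3-5)])
    apply (simp only: mem_Collect_eq)
    apply (erule conjE)+
    apply (erule less_imp_le)
    done
  fix \<eta> assume eS: "\<eta> \<in> unit_sphere_phi \<phi>"
  then have eS': "\<eta> \<in> S" using S_def by simp
  have pos: "D \<zeta> \<eta> > 0" if "\<zeta> \<in> S" "\<phi> (\<zeta> - \<eta>) \<le> R_const \<phi> \<epsilon>" for \<zeta>
  proof -
    have "\<phi> (\<zeta> - \<eta>) \<le> 1" using that(2) R1 by linarith
    then show ?thesis by (rule deriv_pos[OF N SC dD[OF S0[OF that(1)]] S1[OF that(1)] S1[OF eS']])
  qed
  show "inj_on (pi_map \<phi> \<eta>) (unit_sphere_phi \<phi> \<inter> {z. \<phi> (z - \<eta>) \<le> R_const \<phi> \<epsilon>})"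
  proof (rule inj_onI)
    fix z1 z2 assume z1: "z1 \<in> unit_sphere_phi \<phi> \<inter> {z. \<phi> (z - \<eta>) \<le> R_const \<phi> \<epsilon>}"
      and z2: "z2 \<in> unit_sphere_phi \<phi> \<inter> {z. \<phi> (z - \<eta>) \<le> R_const \<phi> \<epsilon>}"
      and eq: "pi_map \<phi> \<eta> z1 = pi_map \<phi> \<eta> z2"
    have z1S: "z1 \<in> S" and z2S: "z2 \<in> S" using z1 z2 S_def by auto
    have z1R: "\<phi> (z1 - \<eta>) \<le> R_const \<phi> \<epsilon>" using z1 by simp
    have z2R: "\<phi> (z2 - \<eta>) \<le> R_const \<phi> \<epsilon>" using z2 by simp
    have c1: "D z1 \<eta> > 0" by (rule pos[OF z1S z1R])
    have c2: "D z2 \<eta> > 0" by (rule pos[OF z2S z2R])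
    define t where "t = D \<eta> z1 - D \<eta> z2"
    have eq': "z1 - D \<eta> z1 *\<^sub>R \<eta> = z2 - D \<eta> z2 *\<^sub>R \<eta>"
      using eq unfolding pi[OF eS'] .
    have "z1 - z2 = (z1 - D \<eta> z1 *\<^sub>R \<eta>) - (z2 - D \<eta> z2 *\<^sub>R \<eta>) + (D \<eta> z1 *\<^sub>R \<eta> - D \<eta> z2 *\<^sub>R \<eta>)"
      by simp
    also have "\<dots> = D \<eta> z1 *\<^sub>R \<eta> - D \<eta> z2 *\<^sub>R \<eta>" unfolding eq' by simp
    also have "\<dots> = t *\<^sub>R \<eta>" unfolding t_def by (rule scaleR_diff_left[symmetric])
    finally have diff: "z1 - z2 = t *\<^sub>R \<eta>" .
    have a1: "D z1 z2 \<le> 1" using deriv_sub[OF N dD[OF S0[OF z1S]], of z2] S1[OF z2S] by simp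
    have b1: "D z1 z1 = 1" using deriv_self[OF N dD[OF S0[OF z1S]]] S1[OF z1S] by simp
    have a2: "D z2 z1 \<le> 1" using deriv_sub[OF N dD[OF S0[OF z2S]], of z1] S1[OF z1S] by simp
    have b2: "D z2 z2 = 1" using deriv_self[OF N dD[OF S0[OF z2S]]] S1[OF z2S] by simp
    have "D z1 (z1 - z2) = t * D z1 \<eta>" unfolding diff by (simp add: blinfun.scaleR_right)
    moreover have "D z1 (z1 - z2) = D z1 z1 - D z1 z2" by (rule blinfun.diff_right)
    ultimately have "t * D z1 \<eta> \<ge> 0" using a1 b1 by linarith
    then have t1: "t \<ge> 0" using c1 by (simp add: zero_le_mult_iff)
    have "D z2 (z1 - z2) = t * D z2 \<eta>" unfolding diff by (simp add: blinfun.scaleR_right)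
    moreover have "D z2 (z1 - z2) = D z2 z1 - D z2 z2" by (rule blinfun.diff_right)
    ultimately have "t * D z2 \<eta> \<le> 0" using a2 b2 by linarith
    then have t2: "t \<le> 0" using c2 by (simp add: mult_le_0_iff)
    from t1 t2 have "t = 0" by simp
    then show "z1 = z2" using diff by simp
  qed
qed

end
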